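(* Let $W$ and $H$ be arbitrary finite simple graphs, $U\subseteq V(W)$, and $G=W(U)\sqcap H$. Then \[Z(G)\le\min\bigl\{\,Z(W)\,|V(H)|,\ \ Z(H)\,|U|+(|V(W)|-|U|)\,|V(H)|\,\bigr\}.\]
   Context: All graphs are finite, simple and undirected. Zero forcing: given a graph $G$ and a set $S\subseteq V(G)$ of initially filled vertices, the color change rule says that if a filled vertex $v$ has exactly one unfilled neighbor $u$, then $v$ forces $u$ to become filled. $S$ is a zero forcing set if repeatedly applying this rule eventually fills every vertex of $G$. The zero forcing number $Z(G)$ is the minimum cardinality of a zero forcing set of $G$. Generalized hierarchical product: for graphs $W,H$ and $U\subseteq V(W)$ (the root set), $W(U)\sqcap H$ is the graph with vertex set $V(W)\times V(H)$ in which $(x_1,y_1)$ and $(x_2,y_2)$ are adjacent iff either ($x_1=x_2\in U$ and $y_1y_2\in E(H)$) or ($y_1=y_2$ and $x_1x_2\in E(W)$). *)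

theory Defs
  imports Main
begin

definition simple_graph :: "'a set \<Rightarrow> 'a set set \<Rightarrow> bool" where
  "simple_graph V E \<longleftrightarrow> finite V \<and> (\<forall>e\<in>E. \<exists>x y. x \<in> V \<and> y \<in> V \<and> x \<noteq> y \<and> e = {x, y})"

definition adj :: "'a set set \<Rightarrow> 'a \<Rightarrow> 'a \<Rightarrow> bool" where
  "adj E x y \<longleftrightarrow> {x, y} \<in> E"

inductive_set filled :: "'a set \<Rightarrow> 'a set set \<Rightarrow> 'a set \<Rightarrow> 'a set"
  for V :: "'a set" and E :: "'a set set" and S :: "'a set" where
  init: "v \<in> S \<Longrightarrow> v \<in> filled V E S"
| force: "\<lbrakk> v \<in> filled V E S; v \<in> V; u \<in> V; adj E v u;
            \<forall>w\<in>V. adj E v w \<and> w \<noteq> u \<longrightarrow> w \<in> filled V E S \<rbrakk>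
          \<Longrightarrow> u \<in> filled V E S"

definition zero_forcing_set :: "'a set \<Rightarrow> 'a set set \<Rightarrow> 'a set \<Rightarrow> bool" where
  "zero_forcing_set V E S \<longleftrightarrow> S \<subseteq> V \<and> V \<subseteq> filled V E S"

definition zero_forcing_number :: "'a set \<Rightarrow> 'a set set \<Rightarrow> nat" where
  "zero_forcing_number V E = Min (card ` {S. zero_forcing_set V E S})"

definition hprod_vertices :: "'a set \<Rightarrow> 'b set \<Rightarrow> ('a \<times> 'b) set" where
  "hprod_vertices VW VH = VW \<times> VH"

definition hprod_edges ::
  "'a set \<Rightarrow> 'a set set \<Rightarrow> 'a set \<Rightarrow> 'b set \<Rightarrow> 'b set set \<Rightarrow> ('a \<times> 'b) set set" where
  "hprod_edges VW EW U VH EH =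
     {{(x1, y1), (x2, y2)} | x1 y1 x2 y2.
        x1 \<in> VW \<and> x2 \<in> VW \<and> y1 \<in> VH \<and> y2 \<in> VH \<and>
        ((x1 = x2 \<and> x1 \<in> U \<and> adj EH y1 y2) \<or> (y1 = y2 \<and> adj EW x1 x2))}"

end

theory Submission
  imports Defs
begin

lemma adj_sym: "adj E x y = adj E y x"
  by (simp add: adj_def insert_commute)

lemma adj_hprod:
  "adj (hprod_edges VW EW U VH EH) (x1,y1) (x2,y2) \<longleftrightarrow>
     x1 \<in> VW \<and> x2 \<in> VW \<and> y1 \<in> VH \<and> y2 \<in> VH \<and>
        ((x1 = x2 \<and> x1 \<in> U \<and> adj EH y1 y2) \<or> (y1 = y2 \<and> adj EW x1 x2))"
  (is "?L \<longleftrightarrow> ?R")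
proof
  assume ?R thus ?L unfolding adj_def hprod_edges_def by blast
next
  assume ?L
  then obtain a1 b1 a2 b2 where e: "{(x1,y1),(x2,y2)} = {(a1,b1),(a2,b2)}"
    and c: "a1 \<in> VW \<and> a2 \<in> VW \<and> b1 \<in> VH \<and> b2 \<in> VH \<and>
        ((a1 = a2 \<and> a1 \<in> U \<and> adj EH b1 b2) \<or> (b1 = b2 \<and> adj EW a1 a2))"
    unfolding adj_def hprod_edges_def by blast
  from e have "((x1,y1) = (a1,b1) \<and> (x2,y2) = (a2,b2)) \<or> ((x1,y1) = (a2,b2) \<and> (x2,y2) = (a1,b1))"
    by (simp add: doubleton_eq_iff)
  thus ?R using c adj_sym by (metis Pair_inject)
qed

lemma zfn_le:
  assumes "finite V" "zero_forcing_set V E S"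
  shows "zero_forcing_number V E \<le> card S"
proof -
  have "{S. zero_forcing_set V E S} \<subseteq> Pow V" by (auto simp: zero_forcing_set_def)
  hence "finite {S. zero_forcing_set V E S}" using assms(1) by (meson finite_Pow_iff finite_subset)
  thus ?thesis unfolding zero_forcing_number_def using assms(2) by (simp add: Min_le)
qed

lemma zfn_ex:
  assumes "finite V"
  shows "\<exists>S. zero_forcing_set V E S \<and> card S = zero_forcing_number V E"
proof -
  have "{S. zero_forcing_set V E S} \<subseteq> Pow V" by (auto simp: zero_forcing_set_def)
  hence f: "finite {S. zero_forcing_set V E S}" using assms(1) by (meson finite_Pow_iff finite_subset)
  have "zero_forcing_set V E V" by (auto simp: zero_forcing_set_def intro: filled.init)
  hence "card ` {S. zero_forcing_set V E S} \<noteq> {}" by blast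
  hence "zero_forcing_number V E \<in> card ` {S. zero_forcing_set V E S}"
    unfolding zero_forcing_number_def using f by (intro Min_in) auto
  thus ?thesis by auto
qed

lemma bound1:
  assumes "S \<subseteq> VW"
  shows "x \<in> filled VW EW S \<Longrightarrow> \<forall>y\<in>VH. (x,y) \<in> filled (hprod_vertices VW VH) (hprod_edges VW EW U VH EH) (S \<times> VH)"
proof (induction rule: filled.induct)
  case (init v) thus ?case by (auto intro: filled.init)
next
  case (force v u)
  show ?case
  proof
    fix y assume y: "y \<in> VH"
    show "(u,y) \<in> filled (hprod_vertices VW VH) (hprod_edges VW EW U VH EH) (S \<times> VH)"
    proof (rule filled.force[where v="(v,y)"])
      show "(v,y) \<in> filled (hprod_vertices VW VH) (hprod_edges VW EW U VH EH) (S \<times> VH)"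
        using force y by blast
      show "(v,y) \<in> hprod_vertices VW VH" "(u,y) \<in> hprod_vertices VW VH"
        using force y by (auto simp: hprod_vertices_def)
      show "adj (hprod_edges VW EW U VH EH) (v, y) (u, y)"
        using force y by (simp add: adj_hprod)
      show "\<forall>w\<in>hprod_vertices VW VH. adj (hprod_edges VW EW U VH EH) (v, y) w \<and> w \<noteq> (u, y) \<longrightarrow>
          w \<in> filled (hprod_vertices VW VH) (hprod_edges VW EW U VH EH) (S \<times> VH)"
      proof (intro ballI impI)
        fix w assume w: "w \<in> hprod_vertices VW VH"
          "adj (hprod_edges VW EW U VH EH) (v, y) w \<and> w \<noteq> (u, y)"
        obtain a b where ab: "w = (a,b)" by force
        show "w \<in> filled (hprod_vertices VW VH) (hprod_edges VW EW U VH EH) (S \<times> VH)"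
          using w force unfolding ab by (auto simp: adj_hprod)
      qed
    qed
  qed
qed

lemma bound2:
  assumes "T \<subseteq> VH" "U \<subseteq> VW"
  shows "y \<in> filled VH EH T \<Longrightarrow> \<forall>x\<in>U. (x,y) \<in> filled (hprod_vertices VW VH) (hprod_edges VW EW U VH EH) ((U \<times> T) \<union> ((VW - U) \<times> VH))"
proof (induction rule: filled.induct)
  case (init v) thus ?case by (auto intro: filled.init)
next
  case (force v u)
  show ?case
  proof
    fix x assume x: "x \<in> U"
    show "(x,u) \<in> filled (hprod_vertices VW VH) (hprod_edges VW EW U VH EH) ((U \<times> T) \<union> ((VW - U) \<times> VH))"
    proof (rule filled.force[where v="(x,v)"])
      show "(x,v) \<in> filled (hprod_vertices VW VH) (hprod_edges VW EW U VH EH) ((U \<times> T) \<union> ((VW - U) \<times> VH))"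
        using force x by blast
      show "(x,v) \<in> hprod_vertices VW VH" "(x,u) \<in> hprod_vertices VW VH"
        using force x assms by (auto simp: hprod_vertices_def)
      show "adj (hprod_edges VW EW U VH EH) (x, v) (x, u)"
        using force x assms by (auto simp add: adj_hprod)
      show "\<forall>w\<in>hprod_vertices VW VH. adj (hprod_edges VW EW U VH EH) (x, v) w \<and> w \<noteq> (x, u) \<longrightarrow>
          w \<in> filled (hprod_vertices VW VH) (hprod_edges VW EW U VH EH) ((U \<times> T) \<union> ((VW - U) \<times> VH))"
      proof (intro ballI impI)
        fix w assume w: "w \<in> hprod_vertices VW VH"
          "adj (hprod_edges VW EW U VH EH) (x, v) w \<and> w \<noteq> (x, u)"
        obtain a b where ab: "w = (a,b)" by force
        show "w \<in> filled (hprod_vertices VW VH) (hprod_edges VW EW U VH EH) ((U \<times> T) \<union> ((VW - U) \<times> VH))"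
        proof (cases "a \<in> U")
          case True thus ?thesis using w force unfolding ab by (auto simp: adj_hprod)
        next
          case False thus ?thesis using w unfolding ab by (auto simp: hprod_vertices_def intro: filled.init)
        qed
      qed
    qed
  qed
qed

theorem mainTheorem11:
  fixes VW :: "'a set" and EW :: "'a set set" and VH :: "'b set" and EH :: "'b set set"
    and U :: "'a set"
  assumes "simple_graph VW EW" and "simple_graph VH EH" and "U \<subseteq> VW"
  shows "zero_forcing_number (hprod_vertices VW VH) (hprod_edges VW EW U VH EH)
         \<le> min (zero_forcing_number VW EW * card VH)
                (zero_forcing_number VH EH * card U + (card VW - card U) * card VH)"
proof -
  have fW: "finite VW" and fH: "finite VH" using assms by (auto simp: simple_graph_def)
  have fG: "finite (hprod_vertices VW VH)" using fW fH by (simp add: hprod_vertices_def)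
  obtain S where S: "zero_forcing_set VW EW S" "card S = zero_forcing_number VW EW"
    using zfn_ex[OF fW] by blast
  obtain T where T: "zero_forcing_set VH EH T" "card T = zero_forcing_number VH EH"
    using zfn_ex[OF fH] by blast
  have z1: "zero_forcing_set (hprod_vertices VW VH) (hprod_edges VW EW U VH EH) (S \<times> VH)"
    unfolding zero_forcing_set_def
  proof
    show "S \<times> VH \<subseteq> hprod_vertices VW VH" using S(1)
      by (auto simp: zero_forcing_set_def hprod_vertices_def)
    show "hprod_vertices VW VH \<subseteq> filled (hprod_vertices VW VH) (hprod_edges VW EW U VH EH) (S \<times> VH)"
      using bound1[where S=S and VW=VW and EW=EW and VH=VH and U=U and EH=EH] S(1) by (auto simp: zero_forcing_set_def hprod_vertices_def)
  qed
  have c1: "card (S \<times> VH) = zero_forcing_number VW EW * card VH"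
    using S(2) by (simp add: card_cartesian_product)
  have z2: "zero_forcing_set (hprod_vertices VW VH) (hprod_edges VW EW U VH EH) ((U \<times> T) \<union> ((VW - U) \<times> VH))"
    unfolding zero_forcing_set_def
  proof
    show "(U \<times> T) \<union> ((VW - U) \<times> VH) \<subseteq> hprod_vertices VW VH" using T(1) assms(3)
      by (auto simp: zero_forcing_set_def hprod_vertices_def)
    show "hprod_vertices VW VH \<subseteq> filled (hprod_vertices VW VH) (hprod_edges VW EW U VH EH) ((U \<times> T) \<union> ((VW - U) \<times> VH))"
    proof
      fix p assume p: "p \<in> hprod_vertices VW VH"
      obtain a b where ab: "p = (a,b)" by force
      show "p \<in> filled (hprod_vertices VW VH) (hprod_edges VW EW U VH EH) ((U \<times> T) \<union> ((VW - U) \<times> VH))"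
      proof (cases "a \<in> U")
        case True
        thus ?thesis using bound2[where T=T and VH=VH and U=U and VW=VW and y=b and EH=EH and EW=EW] T(1) assms(3) p unfolding ab
          by (auto simp: zero_forcing_set_def hprod_vertices_def)
      next
        case False thus ?thesis using p unfolding ab by (auto simp: hprod_vertices_def intro: filled.init)
      qed
    qed
  qed
  have fU: "finite U" using fW assms(3) finite_subset by blast
  have fT: "finite T" using T(1) fH finite_subset by (auto simp: zero_forcing_set_def)
  have c2: "card ((U \<times> T) \<union> ((VW - U) \<times> VH)) = zero_forcing_number VH EH * card U + (card VW - card U) * card VH"
  proof -
    have "card ((U \<times> T) \<union> ((VW - U) \<times> VH)) = card (U \<times> T) + card ((VW - U) \<times> VH)"
      by (rule card_Un_disjoint) (use fU fT fW fH in auto)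
    also have "\<dots> = card U * card T + card (VW - U) * card VH" by (simp add: card_cartesian_product)
    also have "card (VW - U) = card VW - card U" using assms(3) fU by (simp add: card_Diff_subset)
    finally show ?thesis using T(2) by simp
  qed
  show ?thesis using zfn_le[OF fG z1] zfn_le[OF fG z2] c1 c2 by simp
qed

end
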